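(* Let $q\in\mathbb N$, $N>q$, $\theta\in[0,1]$ and $\alpha>1$. Let $\mathbb X=\{x\subseteq\mathbb N: x \text{ finite}, |x|>q\}$ and $\mathbb Y$ the set of size-$q$ subsets of elements of $\mathbb X$. There exist datasets $x\simeq_\Delta x'$ of size $N$ and a function $h:\mathbb Y\to\{0,1\}$ such that the subsampled randomized response mechanism $M=B\circ S$ ($S$ subsampling without replacement with batch size $q$, $B(y)=|h(y)-(1-V)|$, $V\sim\mathrm{Bern}(\theta)$) satisfies $$\Lambda_\alpha(m_x\|m_{x'})=\max_{\tau\in\{\theta,1-\theta\}}\Lambda_\alpha\big((1-w)\mathrm{Bern}(\cdot\mid\theta)+w\,\mathrm{Bern}(\cdot\mid\tau)\ \big\|\ (1-w)\mathrm{Bern}(\cdot\mid\theta)+w\,\mathrm{Bern}(\cdot\mid1-\tau)\big),\quad w=q/N.$$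
   Context: Subsampling without replacement: $s_x(y)=\binom{|x|}{q}^{-1}$ for $y\subseteq x$, $|y|=q$. $b_y$ is the pmf of $B(y)$ on $\{0,1\}$ and $m_x=\sum_y b_y s_x(y)$. $\mathrm{Bern}(\cdot\mid p)$ is the pmf on $\{0,1\}$ with mass $p$ at $1$. $x\simeq_\Delta x'$ iff $x'=(x\setminus\{a\})\cup\{a'\}$ with $a\in x$, $a'\notin x$. $\Lambda_\alpha(p\|q)=\sum_{z\in\{0,1\}}p(z)^\alpha q(z)^{1-\alpha}$. *)

theory Defs
  imports Complex_Main "HOL-Library.Extended_Real"
begin

text \<open>Probability mass functions on {0,1} are represented as functions nat => real
  (only the values at 0 and 1 matter).\<close>

definition bern :: "real \<Rightarrow> nat \<Rightarrow> real" where
  "bern p z = (if z = 1 then p else if z = 0 then 1 - p else 0)"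

definition Lambda_term :: "real \<Rightarrow> real \<Rightarrow> real \<Rightarrow> ereal" where
  "Lambda_term \<alpha> a b =
     (if b = 0 then (if a = 0 then 0 else \<infinity>) else ereal (a powr \<alpha> * b powr (1 - \<alpha>)))"

definition Lambda :: "real \<Rightarrow> (nat \<Rightarrow> real) \<Rightarrow> (nat \<Rightarrow> real) \<Rightarrow> ereal" where
  "Lambda \<alpha> p q = (\<Sum>z\<in>{0,1::nat}. Lambda_term \<alpha> (p z) (q z))"

definition subsample :: "nat \<Rightarrow> nat set \<Rightarrow> nat set \<Rightarrow> real" where
  "subsample q x y = (if y \<subseteq> x \<and> card y = q then 1 / real (card x choose q) else 0)"

definition rr_pmf :: "real \<Rightarrow> (nat set \<Rightarrow> nat) \<Rightarrow> nat set \<Rightarrow> nat \<Rightarrow> real" where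
  "rr_pmf \<theta> h y z =
     (\<Sum>v\<in>{0,1::nat}. bern \<theta> v *
        (if \<bar>int (h y) - (1 - int v)\<bar> = int z then 1 else 0))"

definition mech_pmf :: "nat \<Rightarrow> real \<Rightarrow> (nat set \<Rightarrow> nat) \<Rightarrow> nat set \<Rightarrow> nat \<Rightarrow> real" where
  "mech_pmf q \<theta> h x z = (\<Sum>y\<in>{y. y \<subseteq> x \<and> card y = q}. rr_pmf \<theta> h y z * subsample q x y)"

definition subst_nbr :: "nat set \<Rightarrow> nat set \<Rightarrow> bool" where
  "subst_nbr x x' \<longleftrightarrow> (\<exists>a a'. a \<in> x \<and> a' \<notin> x \<and> x' = (x - {a}) \<union> {a'})"

definition mix :: "real \<Rightarrow> (nat \<Rightarrow> real) \<Rightarrow> (nat \<Rightarrow> real) \<Rightarrow> nat \<Rightarrow> real" where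
  "mix w p1 p2 z = (1 - w) * p1 z + w * p2 z"

end

theory Submission
  imports Defs
begin

lemma rr1: "h y = 1 \<Longrightarrow> rr_pmf \<theta> h y z = bern \<theta> z"
  unfolding rr_pmf_def bern_def by auto

lemma rr0: "h y = 0 \<Longrightarrow> rr_pmf \<theta> h y z = bern (1 - \<theta>) z"
  unfolding rr_pmf_def bern_def by auto

lemma mech_lemma:
  assumes fin: "finite x" and cx: "card x = N" and qN: "q < N"
  shows "mech_pmf q \<theta> (\<lambda>y. if a \<in> y then 0 else 1) x z =
    (if a \<in> x then mix (real q / real N) (bern \<theta>) (bern (1 - \<theta>)) z else bern \<theta> z)"
proof -
  define S where "S = {y. y \<subseteq> x \<and> card y = q}"
  define C where "C = card x choose q"
  have finS: "finite S" unfolding S_def using fin by simp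
  have cS: "card S = C" unfolding S_def C_def using n_subsets[OF fin] by simp
  have Cpos: "C > 0" unfolding C_def using cx qN by simp
  let ?h = "\<lambda>y::nat set. if a \<in> y then 0::nat else 1"
  have rr: "rr_pmf \<theta> ?h y z = (if a \<in> y then bern (1 - \<theta>) z else bern \<theta> z)" for y
    using rr0[of ?h y \<theta> z] rr1[of ?h y \<theta> z] by auto
  have "mech_pmf q \<theta> ?h x z = (\<Sum>y\<in>S. (if a \<in> y then bern (1 - \<theta>) z else bern \<theta> z) * (1 / real C))"
    unfolding mech_pmf_def S_def[symmetric]
    by (rule sum.cong) (auto simp: rr subsample_def S_def C_def)
  also have "\<dots> = (\<Sum>y\<in>S. (if a \<in> y then bern (1 - \<theta>) z else bern \<theta> z)) / real C"
    by (simp add: sum_divide_distrib)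
  also have "(\<Sum>y\<in>S. (if a \<in> y then bern (1 - \<theta>) z else bern \<theta> z))
      = real (card (S \<inter> {y. a \<in> y})) * bern (1 - \<theta>) z + real (card (S - {y. a \<in> y})) * bern \<theta> z"
    using sum.If_cases[OF finS, of "\<lambda>y. a \<in> y" "\<lambda>_. bern (1 - \<theta>) z" "\<lambda>_. bern \<theta> z"] by (simp add: Diff_eq)
  finally have eq: "mech_pmf q \<theta> ?h x z =
      (real (card (S \<inter> {y. a \<in> y})) * bern (1 - \<theta>) z + real (card (S - {y. a \<in> y})) * bern \<theta> z) / real C" .
  have split: "card S = card (S \<inter> {y. a \<in> y}) + card (S - {y. a \<in> y})"
    using card_Int_Diff[OF finS] .
  show ?thesis
  proof (cases "a \<in> x")
    case False
    have "S \<inter> {y. a \<in> y} = {}" unfolding S_def using False by auto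
    then have "card (S - {y. a \<in> y}) = C" using split cS by simp
    then show ?thesis using eq False \<open>S \<inter> {y. a \<in> y} = {}\<close> Cpos by simp
  next
    case True
    have "S - {y. a \<in> y} = {y. y \<subseteq> x - {a} \<and> card y = q}" unfolding S_def by auto
    then have c1: "card (S - {y. a \<in> y}) = (N - 1) choose q"
      using n_subsets[of "x - {a}" q] fin True cx by simp
    have c2: "card (S \<inter> {y. a \<in> y}) = C - ((N - 1) choose q)" using split cS c1 by simp
    have le: "(N - 1) choose q \<le> C" using split cS c1 by simp
    have abs: "(N - q) * C = N * ((N - 1) choose q)" unfolding C_def cx by (rule binomial_absorb_comp)
    have abs': "real (N - q) * real C = real N * real ((N - 1) choose q)"
      using arg_cong[OF abs, of real] by simp
    have Npos: "real N > 0" using qN by simp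
    have r1: "real ((N - 1) choose q) / real C = 1 - real q / real N"
      using abs' Npos Cpos qN by (simp add: field_simps of_nat_diff)
    have r2: "real (C - ((N - 1) choose q)) / real C = real q / real N"
      using r1 le Cpos by (simp add: of_nat_diff diff_divide_distrib)
    have "mech_pmf q \<theta> ?h x z = real (C - ((N - 1) choose q)) / real C * bern (1 - \<theta>) z
        + real ((N - 1) choose q) / real C * bern \<theta> z"
      using eq c1 c2 by (simp add: add_divide_distrib)
    then have "mech_pmf q \<theta> ?h x z = real q / real N * bern (1 - \<theta>) z + (1 - real q / real N) * bern \<theta> z" unfolding r1 r2 .
    then show ?thesis using True by (simp add: mix_def)
  qed
qed

theorem mainTheorem14:
  fixes q N :: nat and \<theta> \<alpha> :: real
  assumes "N > q" and "0 \<le> \<theta>" and "\<theta> \<le> 1" and "\<alpha> > 1"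
  shows "\<exists>(x::nat set) (x'::nat set) (h::nat set \<Rightarrow> nat).
           finite x \<and> card x = N \<and> finite x' \<and> card x' = N \<and> subst_nbr x x' \<and>
           (\<forall>y. h y \<in> {0, 1}) \<and>
           Lambda \<alpha> (mech_pmf q \<theta> h x) (mech_pmf q \<theta> h x') =
             Max ((\<lambda>\<tau>. Lambda \<alpha> (mix (real q / real N) (bern \<theta>) (bern \<tau>))
                                  (mix (real q / real N) (bern \<theta>) (bern (1 - \<tau>)))) ` {\<theta>, 1 - \<theta>})"
proof -
  define w where "w = real q / real N"
  define M where "M = mix w (bern \<theta>) (bern (1 - \<theta>))"
  define f where "f = (\<lambda>\<tau>. Lambda \<alpha> (mix w (bern \<theta>) (bern \<tau>)) (mix w (bern \<theta>) (bern (1 - \<tau>))))"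
  have mixsame: "mix w (bern \<theta>) (bern \<theta>) = bern \<theta>" by (rule ext) (simp add: mix_def algebra_simps)
  have f1: "f \<theta> = Lambda \<alpha> (bern \<theta>) M" unfolding f_def M_def mixsame ..
  have f2: "f (1 - \<theta>) = Lambda \<alpha> M (bern \<theta>)" unfolding f_def M_def by (simp add: mixsame)
  have Mx: "Max (f ` {\<theta>, 1 - \<theta>}) = max (f \<theta>) (f (1 - \<theta>))" by simp
  define x where "x = {0..<N}"
  define x' where "x' = {1..N}"
  have fx: "finite x" "card x = N" "finite x'" "card x' = N" unfolding x_def x'_def by auto
  have "0 \<in> x" "N \<notin> x" "x' = (x - {0}) \<union> {N}" using assms(1) unfolding x_def x'_def by auto
  then have nb: "subst_nbr x x'" unfolding subst_nbr_def by blast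
  have m0x: "mech_pmf q \<theta> (\<lambda>y. if 0 \<in> y then 0 else 1) x = M"
    by (rule ext, subst mech_lemma[OF fx(1,2) assms(1)]) (simp add: M_def w_def x_def, use assms(1) in linarith)
  have m0x': "mech_pmf q \<theta> (\<lambda>y. if 0 \<in> y then 0 else 1) x' = bern \<theta>"
    by (rule ext, subst mech_lemma[OF fx(3,4) assms(1)]) (simp add: x'_def)
  have mNx: "mech_pmf q \<theta> (\<lambda>y. if N \<in> y then 0 else 1) x = bern \<theta>"
    by (rule ext, subst mech_lemma[OF fx(1,2) assms(1)]) (simp add: x_def)
  have mNx': "mech_pmf q \<theta> (\<lambda>y. if N \<in> y then 0 else 1) x' = M"
    by (rule ext, subst mech_lemma[OF fx(3,4) assms(1)]) (simp add: M_def w_def x'_def, use assms(1) in linarith)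
  show ?thesis
  proof (cases "f \<theta> \<le> f (1 - \<theta>)")
    case True
    show ?thesis
      apply (rule exI[of _ x], rule exI[of _ x'], rule exI[of _ "\<lambda>y. if 0 \<in> y then 0 else 1"])
      using fx nb m0x m0x' True Mx f2 unfolding f_def w_def by (simp add: max_def)
  next
    case False
    show ?thesis
      apply (rule exI[of _ x], rule exI[of _ x'], rule exI[of _ "\<lambda>y. if N \<in> y then 0 else 1"])
      using fx nb mNx mNx' False Mx f1 unfolding f_def w_def by (simp add: max_def)
  qed
qed

end
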